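(* Every $(F,G)\in\mathcal F^{(1)}$ is a $1$-uniform dual pair; that is, $\langle f_i,g_i\rangle=\frac nN$ for all $1\le i\le N$.
   Context: $\mathcal H$ is a complex Hilbert space of finite dimension $n$, inner product linear in the first argument. A finite sequence $F=\{f_i\}_{i=1}^N$ in $\mathcal H$ is a frame if there are constants $0<A\le B$ with $A\|f\|^2\le\sum_{i=1}^N|\langle f,f_i\rangle|^2\le B\|f\|^2$ for all $f$. A sequence $G=\{g_i\}_{i=1}^N$ is a dual of $F$ if $f=\sum_{i=1}^N\langle f,g_i\rangle f_i$ for all $f$; then $(F,G)$ is an $(N,n)$ dual pair. A dual pair is $1$-uniform if $\langle f_i,g_i\rangle$ is independent of $i$. The error operator for $\Lambda\subseteq\{1,\dots,N\}$ is $E_{\Lambda,F,G}f=\sum_{i\in\Lambda}\langle f,f_i\rangle g_i$. With $\|T\|_{\mathcal F}=\sqrt{\operatorname{tr}(T^*T)}$, $\epsilon^{(1)}_{F,G}=\max_{1\le i\le N}\|E_{\{i\},F,G}\|_{\mathcal F}$, $\epsilon^{(1)}=\inf\{\epsilon^{(1)}_{F,G}:(F,G)\text{ an }(N,n)\text{ dual pair}\}$, $\mathcal F^{(1)}=\{(F,G):\epsilon^{(1)}_{F,G}=\epsilon^{(1)}\}$. *)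

theory Defs
  imports "HOL-Analysis.Analysis"
begin

text \<open>The n-dimensional complex Hilbert space is modelled as complex^'n with CARD('n) = n,
  with the standard inner product, linear in the first argument.\<close>

definition cinner :: "complex^'n \<Rightarrow> complex^'n \<Rightarrow> complex" where
  "cinner x y = (\<Sum>j\<in>UNIV. x$j * cnj (y$j))"

definition hnorm :: "complex^'n \<Rightarrow> real" where
  "hnorm x = sqrt (Re (cinner x x))"

definition is_frame :: "nat \<Rightarrow> (nat \<Rightarrow> complex^'n) \<Rightarrow> bool" where
  "is_frame N F \<longleftrightarrow> (\<exists>A B. 0 < A \<and> A \<le> B \<and>
     (\<forall>f. A * (hnorm f)^2 \<le> (\<Sum>i=1..N. (cmod (cinner f (F i)))^2) \<and>
          (\<Sum>i=1..N. (cmod (cinner f (F i)))^2) \<le> B * (hnorm f)^2))"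

definition is_dual :: "nat \<Rightarrow> (nat \<Rightarrow> complex^'n) \<Rightarrow> (nat \<Rightarrow> complex^'n) \<Rightarrow> bool" where
  "is_dual N F G \<longleftrightarrow> (\<forall>f. f = (\<Sum>i=1..N. cinner f (G i) *s F i))"

definition dual_pair :: "nat \<Rightarrow> (nat \<Rightarrow> complex^'n) \<Rightarrow> (nat \<Rightarrow> complex^'n) \<Rightarrow> bool" where
  "dual_pair N F G \<longleftrightarrow> is_frame N F \<and> is_dual N F G"

definition uniform1 :: "nat \<Rightarrow> (nat \<Rightarrow> complex^'n) \<Rightarrow> (nat \<Rightarrow> complex^'n) \<Rightarrow> bool" where
  "uniform1 N F G \<longleftrightarrow> (\<forall>i\<in>{1..N}. \<forall>j\<in>{1..N}. cinner (F i) (G i) = cinner (F j) (G j))"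

definition err_op :: "(nat \<Rightarrow> complex^'n) \<Rightarrow> (nat \<Rightarrow> complex^'n) \<Rightarrow> nat set \<Rightarrow> complex^'n \<Rightarrow> complex^'n" where
  "err_op F G \<Lambda> f = (\<Sum>i\<in>\<Lambda>. cinner f (F i) *s G i)"

definition conj_transpose :: "complex^'m^'n \<Rightarrow> complex^'n^'m" where
  "conj_transpose M = (\<chi> i j. cnj (M$j$i))"

text \<open>Frobenius norm sqrt(tr(T* T)), computed on the matrix of T in the standard (orthonormal) basis\<close>
definition frob_norm :: "(complex^'n \<Rightarrow> complex^'n) \<Rightarrow> real" where
  "frob_norm T = sqrt (Re (trace (conj_transpose (matrix T) ** matrix T)))"

definition eps1_pair :: "nat \<Rightarrow> (nat \<Rightarrow> complex^'n) \<Rightarrow> (nat \<Rightarrow> complex^'n) \<Rightarrow> real" where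
  "eps1_pair N F G = Max ((\<lambda>i. frob_norm (err_op F G {i})) ` {1..N})"

definition eps1 :: "nat \<Rightarrow> 'n::finite itself \<Rightarrow> real" where
  "eps1 N _ = Inf {eps1_pair N F G | F (G :: nat \<Rightarrow> complex^'n). dual_pair N F G}"

definition optF1 :: "nat \<Rightarrow> 'n::finite itself \<Rightarrow> ((nat \<Rightarrow> complex^'n) \<times> (nat \<Rightarrow> complex^'n)) set" where
  "optF1 N _ = {(F, G). dual_pair N F G \<and> eps1_pair N F G = eps1 N TYPE('n)}"

end

theory Submission
  imports Defs
begin


lemma re_cinner_self: "Re (cinner x x) = (\<Sum>j\<in>UNIV. (cmod (x$j))^2)"
  unfolding cinner_def by (simp add: complex_mult_cnj cmod_def power2_eq_square Re_sum)

lemma hnorm_eq: "hnorm x = norm (\<chi> j. cmod (x$j))"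
  unfolding hnorm_def norm_vec_def L2_set_def re_cinner_self by simp

lemma hnorm_sq: "(hnorm x)^2 = (\<Sum>j\<in>UNIV. (cmod (x$j))^2)"
  unfolding hnorm_def re_cinner_self by (simp add: sum_nonneg)

lemma hnorm_nonneg: "0 \<le> hnorm x" by (simp add: hnorm_eq)

lemma cs: "cmod (cinner x y) \<le> hnorm x * hnorm y"
proof -
  have "cmod (cinner x y) \<le> (\<Sum>j\<in>UNIV. cmod (x$j) * cmod (y$j))"
    unfolding cinner_def by (rule order_trans[OF norm_sum]) (simp add: norm_mult)
  also have "\<dots> = (\<chi> j. cmod (x$j)) \<bullet> (\<chi> j. cmod (y$j))"
    by (simp add: inner_vec_def)
  also have "\<dots> \<le> hnorm x * hnorm y"
    unfolding hnorm_eq by (rule norm_cauchy_schwarz)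
  finally show ?thesis .
qed

lemma matrix_err: "matrix (err_op F G {i}) $ r $ c = cnj (F i $ c) * G i $ r"
proof -
  have "(\<Sum>j\<in>UNIV. (if j = c then 1 else 0) * cnj (F i $ j)) = cnj (F i $ c)"
    by (simp add: if_distrib[of "\<lambda>x. x * _"] cong: if_cong)
  thus ?thesis by (simp add: matrix_def err_op_def cinner_def axis_def)
qed

lemma sq_help: "(complex_of_real (cmod a))^2 = a * cnj a"
  by (subst of_real_power[symmetric], rule complex_norm_square)

lemma mul_help: "a * (b * (cnj a * cnj b)) = (complex_of_real (cmod a))^2 * (complex_of_real (cmod b))^2"
  unfolding sq_help by (simp add: mult_ac)

lemma frob: "frob_norm (err_op F G {i}) = hnorm (F i) * hnorm (G i)"
proof -
  have "trace (conj_transpose (matrix (err_op F G {i})) ** matrix (err_op F G {i}))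
     = (\<Sum>c\<in>UNIV. \<Sum>r\<in>UNIV. of_real ((cmod (F i $ c))^2 * (cmod (G i $ r))^2))"
    unfolding trace_def conj_transpose_def matrix_matrix_mult_def
    apply (simp add: matrix_err)
    apply (intro sum.cong refl)
    apply (simp add: sq_help mult_ac)
    done
  hence "Re (trace (conj_transpose (matrix (err_op F G {i})) ** matrix (err_op F G {i})))
     = (\<Sum>c\<in>UNIV. (cmod (F i $ c))^2) * (\<Sum>r\<in>UNIV. (cmod (G i $ r))^2)"
    by (simp add: Re_sum sum_product)
  also have "\<dots> = (hnorm (F i) * hnorm (G i))^2" by (simp add: hnorm_sq power_mult_distrib)
  finally have E: "Re (trace (conj_transpose (matrix (err_op F G {i})) ** matrix (err_op F G {i})))
     = (hnorm (F i) * hnorm (G i))^2" .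
  show ?thesis unfolding frob_norm_def E by (simp add: hnorm_nonneg)
qed



lemma trace_dual:
  fixes F G :: "nat \<Rightarrow> complex^'n::finite"
  assumes "is_dual N F G"
  shows "(\<Sum>i=1..N. cinner (F i) (G i)) = of_nat CARD('n)"
proof -
  have k: "(\<Sum>i=1..N. cnj (G i $ k) * F i $ k) = 1" for k :: 'n
  proof -
    have "axis k 1 = (\<Sum>i=1..N. cinner (axis k 1) (G i) *s F i)"
      using assms unfolding is_dual_def by blast
    hence "(axis k (1::complex)) $ k = (\<Sum>i=1..N. cinner (axis k 1) (G i) *s F i) $ k" by simp
    moreover have "cinner (axis k 1) (G i) = cnj (G i $ k)" for i
    proof -
      have "(\<Sum>j\<in>UNIV. (if j = k then 1 else 0) * cnj (G i $ j)) = cnj (G i $ k)"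
        by (simp add: if_distrib[of "\<lambda>x. x * _"] cong: if_cong)
      thus ?thesis by (simp add: cinner_def axis_def)
    qed
    ultimately show ?thesis by (simp add: sum_component)
  qed
  have "(\<Sum>i=1..N. cinner (F i) (G i)) = (\<Sum>k\<in>(UNIV::'n set). \<Sum>i=1..N. cnj (G i $ k) * F i $ k)"
    unfolding cinner_def by (subst sum.swap) (simp add: mult_ac)
  also have "\<dots> = of_nat CARD('n)" by (simp only: k) simp
  finally show ?thesis .
qed

lemma card_le_N:
  assumes "is_dual N (F :: nat \<Rightarrow> complex^'n::finite) G"
  shows "CARD('n) \<le> N"
proof -
  have "UNIV \<subseteq> vec.span (F ` {1..N})"
  proof
    fix f :: "complex^'n"
    have "f = (\<Sum>i=1..N. cinner f (G i) *s F i)" using assms unfolding is_dual_def by blast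
    also have "\<dots> \<in> vec.span (F ` {1..N})"
      by (intro vec.span_sum vec.span_scale vec.span_base) auto
    finally show "f \<in> vec.span (F ` {1..N})" .
  qed
  hence "vec.dim (UNIV :: (complex^'n) set) \<le> card (F ` {1..N})"
    by (intro vec.dim_le_card) auto
  also have "\<dots> \<le> N" using card_image_le[of "{1..N}" F] by simp
  finally show ?thesis unfolding vec_dim_card .
qed

lemma all_eq:
  fixes z :: "nat \<Rightarrow> complex"
  assumes "1 \<le> N" "(\<Sum>i=1..N. z i) = of_real (real N * c)" "\<And>i. i \<in> {1..N} \<Longrightarrow> cmod (z i) \<le> c"
  shows "\<And>i. i \<in> {1..N} \<Longrightarrow> z i = of_real c"
proof -
  have le: "Re (z i) \<le> c" if "i \<in> {1..N}" for i
    using assms(3)[OF that] complex_Re_le_cmod order_trans by blast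
  have sRe: "(\<Sum>i=1..N. Re (z i)) = (\<Sum>i=1..N. c)"
    using arg_cong[OF assms(2), of Re] by (simp add: Re_sum)
  have eq: "Re (z i) = c" if "i \<in> {1..N}" for i
  proof -
    have "(\<Sum>i=1..N. c - Re (z i)) = 0" using sRe by (simp add: sum_subtractf)
    hence "\<forall>i\<in>{1..N}. c - Re (z i) = 0"
      by (subst sum_nonneg_eq_0_iff[symmetric]) (auto simp: le)
    thus ?thesis using that by auto
  qed
  fix i assume i: "i \<in> {1..N}"
  have "cmod (z i) \<le> Re (z i)" using assms(3)[OF i] eq[OF i] by simp
  hence "(cmod (z i))^2 \<le> (Re (z i))^2" by (intro power_mono) auto
  hence "Im (z i) = 0" unfolding cmod_power2 by simp
  thus "z i = of_real c" using eq[OF i] by (simp add: complex_eq_iff)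
qed



lemma sum_shift_pow: "(\<Sum>i=1..N. (r::complex)^i) = r * (\<Sum>i<N. r^i)"
  by (induct N) (simp_all add: algebra_simps)

lemma exp_ii_pow: "exp (\<i> * complex_of_real x) ^ i = exp (\<i> * complex_of_real (real i * x))"
proof -
  have "\<i> * complex_of_real (real i * x) = of_nat i * (\<i> * complex_of_real x)" by simp
  thus ?thesis by (simp only: exp_of_nat_mult)
qed

lemma root_sum0:
  fixes d :: int
  assumes N: "0 < N" and nd: "\<not> (\<exists>k::int. d = k * int N)"
  shows "(\<Sum>i=1..N. exp (\<i> * complex_of_real (2*pi*real_of_int d / real N))^i) = 0"
proof -
  define r where "r = exp (\<i> * complex_of_real (2*pi*real_of_int d / real N))"
  have rN: "r ^ N = 1"
  proof -
    have "r ^ N = exp (\<i> * complex_of_real (real N * (2*pi*real_of_int d / real N)))"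
      unfolding r_def exp_ii_pow ..
    also have "real N * (2*pi*real_of_int d / real N) = of_int (2 * d) * pi" using N by simp
    also have "exp (\<i> * complex_of_real (of_int (2 * d) * pi)) = 1"
      by (auto simp: exp_eq_1 intro!: exI[of _ d])
    finally show ?thesis .
  qed
  have r1: "r \<noteq> 1"
  proof
    assume "r = 1"
    then obtain k :: int where k: "2*pi*real_of_int d / real N = of_int (2 * k) * pi"
      unfolding r_def exp_eq_1 by auto
    hence "real_of_int d = real_of_int (k * int N)" using N by (simp add: field_simps)
    hence "d = k * int N" by linarith
    thus False using nd by blast
  qed
  have "(\<Sum>i<N. r^i) = (r ^ N - 1) / (r - 1)" by (rule geometric_sum[OF r1])
  also have "\<dots> = 0" using rN by simp
  finally show ?thesis unfolding r_def[symmetric] sum_shift_pow by simp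
qed



definition wph :: "nat \<Rightarrow> nat \<Rightarrow> nat \<Rightarrow> complex" where
  "wph N i a = exp (\<i> * complex_of_real (2*pi*real i * real a / real N))"

lemma wph_norm: "cmod (wph N i a) = 1"
  unfolding wph_def by (simp add: mult.commute[of \<i>])

lemma wph_cnj_self: "wph N i a * cnj (wph N i a) = 1"
  using complex_norm_square[of "wph N i a"] wph_norm[of N i a] by simp

lemma wph_prod: "wph N i a * cnj (wph N i b) =
   exp (\<i> * complex_of_real (2*pi*real_of_int (int a - int b) / real N)) ^ i"
proof -
  have "wph N i a * cnj (wph N i b) = exp (\<i> * complex_of_real (2*pi*real i * real a / real N)
      + - (\<i> * complex_of_real (2*pi*real i * real b / real N)))"
    unfolding wph_def exp_cnj exp_add by simp
  also have "\<i> * complex_of_real (2*pi*real i * real a / real N)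
      + - (\<i> * complex_of_real (2*pi*real i * real b / real N))
      = \<i> * complex_of_real (real i * (2*pi*real_of_int (int a - int b) / real N))"
    by (simp add: algebra_simps diff_divide_distrib)
  finally show ?thesis by (simp only: exp_ii_pow)
qed

lemma orth:
  assumes "a < N" "b < N"
  shows "(\<Sum>i=1..N. wph N i a * cnj (wph N i b)) = (if a = b then of_nat N else 0)"
proof (cases "a = b")
  case True thus ?thesis by (simp add: wph_cnj_self)
next
  case False
  have nd: "\<not> (\<exists>k::int. int a - int b = k * int N)"
  proof
    assume "\<exists>k::int. int a - int b = k * int N"
    then obtain k where k: "int a - int b = k * int N" by blast
    have "k = 0"
    proof (rule ccontr)
      assume "k \<noteq> 0"
      hence "\<bar>k * int N\<bar> \<ge> int N" by (simp add: abs_mult mult_le_cancel_right1) arith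
      with k assms show False by linarith
    qed
    with k False show False by simp
  qed
  have "0 < N" using assms by simp
  from root_sum0[OF this nd] False show ?thesis by (simp add: wph_prod)
qed



definition harm :: "nat \<Rightarrow> ('n::finite \<Rightarrow> nat) \<Rightarrow> nat \<Rightarrow> complex^'n" where
  "harm N e i = (\<chi> j. complex_of_real (1/sqrt (real N)) * wph N i (e j))"

lemma harm_inner:
  assumes "0 < N"
  shows "cnj (harm N e i $ j) * harm N e i $ k = complex_of_real (1/real N) * (wph N i (e k) * cnj (wph N i (e j)))"
proof -
  have "complex_of_real (1/sqrt (real N)) * complex_of_real (1/sqrt (real N)) = complex_of_real (1/real N)"
    unfolding of_real_mult[symmetric] using assms by (simp add: real_sqrt_mult[symmetric])
  thus ?thesis unfolding harm_def by (simp add: algebra_simps)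
qed

lemma harm_dual:
  fixes e :: "'n::finite \<Rightarrow> nat"
  assumes inj: "inj e" and lt: "\<And>j. e j < N"
  shows "is_dual N (harm N e) (harm N e)"
  unfolding is_dual_def
proof
  fix f :: "complex^'n"
  have N: "0 < N" using lt[of undefined] by simp
  show "f = (\<Sum>i=1..N. cinner f (harm N e i) *s harm N e i)"
  proof (subst vec_eq_iff, rule allI)
    fix k
    have "(\<Sum>i=1..N. cinner f (harm N e i) *s harm N e i) $ k
        = (\<Sum>i=1..N. \<Sum>j\<in>UNIV. f$j * (cnj (harm N e i $ j) * harm N e i $ k))"
      by (simp add: sum_component cinner_def sum_distrib_left mult_ac)
    also have "\<dots> = (\<Sum>j\<in>UNIV. \<Sum>i=1..N. f$j * (complex_of_real (1/real N) * (wph N i (e k) * cnj (wph N i (e j)))))"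
      by (subst sum.swap) (simp only: harm_inner[OF N])
    also have "\<dots> = (\<Sum>j\<in>UNIV. f$j * complex_of_real (1/real N) *
         (\<Sum>i=1..N. wph N i (e k) * cnj (wph N i (e j))))"
      by (simp add: sum_distrib_left mult_ac)
    also have "\<dots> = (\<Sum>j\<in>UNIV. if j = k then f$k else 0)"
    proof (rule sum.cong[OF refl])
      fix j
      show "f$j * complex_of_real (1/real N) *
         (\<Sum>i=1..N. wph N i (e k) * cnj (wph N i (e j))) = (if j = k then f$k else 0)"
        using orth[OF lt lt, of k j] inj N by (auto simp: inj_eq)
    qed
    also have "\<dots> = f$k" by simp
    finally show "f $ k = (\<Sum>i=1..N. cinner f (harm N e i) *s harm N e i) $ k" by simp
  qed
qed

lemma harm_hnorm:
  fixes e :: "'n::finite \<Rightarrow> nat"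
  assumes "0 < N"
  shows "(hnorm (harm N e i))^2 = real CARD('n) / real N"
proof -
  have "(cmod (harm N e i $ j))^2 = 1 / real N" for j :: 'n
    using assms by (simp add: harm_def norm_mult norm_divide wph_norm power_divide)
  thus ?thesis by (simp add: hnorm_sq)
qed



lemma cinner_sum_left: "cinner (\<Sum>i\<in>I. c i *s v i) y = (\<Sum>i\<in>I. c i * cinner (v i) y)"
  unfolding cinner_def by (simp add: sum_component sum_distrib_left sum_distrib_right mult_ac sum.swap[of _ I])

lemma cinner_swap: "cinner y x = cnj (cinner x y)"
  unfolding cinner_def by (simp add: mult.commute)

lemma parseval:
  assumes "is_dual N F F"
  shows "(\<Sum>i=1..N. (cmod (cinner f (F i)))^2) = (hnorm f)^2"
proof -
  have "(hnorm f)^2 = Re (cinner f f)"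
    unfolding hnorm_def using re_cinner_self[of f] by (simp add: sum_nonneg)
  also have "cinner f f = cinner (\<Sum>i=1..N. cinner f (F i) *s F i) f"
    using assms unfolding is_dual_def by metis
  also have "\<dots> = (\<Sum>i=1..N. complex_of_real ((cmod (cinner f (F i)))^2))"
    unfolding cinner_sum_left by (simp add: cinner_swap[of "F _" f] sq_help)
  finally show ?thesis by (simp add: Re_sum)
qed

lemma exists_opt:
  assumes "CARD('n::finite) \<le> N"
  shows "\<exists>F (G :: nat \<Rightarrow> complex^'n). dual_pair N F G \<and> eps1_pair N F G = real CARD('n) / real N"
proof -
  obtain e :: "'n \<Rightarrow> nat" where e: "bij_betw e UNIV {0..<CARD('n)}"
    using ex_bij_betw_finite_nat[of "UNIV :: 'n set"] by auto
  have inj: "inj e" using e bij_betw_def by blast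
  have lt: "e j < N" for j
  proof -
    have "e j \<in> {0..<CARD('n)}" using bij_betw_apply[OF e] by simp
    thus ?thesis using assms by simp
  qed
  have N: "0 < N" using lt by (metis not_less_zero gr0I)
  define F where "F = harm N e"
  have dual: "is_dual N F F" unfolding F_def by (rule harm_dual[OF inj lt])
  have frame: "is_frame N F"
    unfolding is_frame_def
    using parseval[OF dual] by (intro exI[of _ 1]) simp
  have fr: "frob_norm (err_op F F {i}) = real CARD('n) / real N" for i
    unfolding frob F_def using harm_hnorm[OF N, of e i] by (simp add: power2_eq_square)
  have "eps1_pair N F F = Max ((\<lambda>i. real CARD('n) / real N) ` {1..N})"
    unfolding eps1_pair_def fr ..
  also have "\<dots> = real CARD('n) / real N" using N by (simp add: image_constant_conv)
  finally show ?thesis using dual frame unfolding dual_pair_def by blast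
qed

theorem corollary3p4:
  fixes F G :: "nat \<Rightarrow> complex^'n::finite" and N :: nat
  assumes "(F, G) \<in> optF1 N TYPE('n)"
  shows "uniform1 N F G \<and> (\<forall>i\<in>{1..N}. cinner (F i) (G i) = of_nat CARD('n) / of_nat N)"
proof -
  have dp: "dual_pair N F G" and opt: "eps1_pair N F G = eps1 N TYPE('n)"
    using assms unfolding optF1_def by auto
  have cardN: "CARD('n) \<le> N" using dp card_le_N unfolding dual_pair_def by blast
  have N1: "1 \<le> N" using cardN by (metis One_nat_def Suc_leI le_trans zero_less_card_finite finite_UNIV UNIV_not_empty)
  define S where "S = {eps1_pair N F G | F (G :: nat \<Rightarrow> complex^'n). dual_pair N F G}"
  have bdd: "bdd_below S"
  proof (rule bdd_belowI[of _ 0])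
    fix x assume "x \<in> S"
    then obtain F' G' :: "nat \<Rightarrow> complex^'n" where x: "x = eps1_pair N F' G'" and d: "dual_pair N F' G'"
      unfolding S_def by auto
    have "CARD('n) \<le> N" using d card_le_N unfolding dual_pair_def by blast
    hence "1 \<le> N" by (metis One_nat_def Suc_leI le_trans zero_less_card_finite finite_UNIV UNIV_not_empty)
    hence "frob_norm (err_op F' G' {1}) \<le> x"
      unfolding x eps1_pair_def by (intro Max_ge) auto
    moreover have "0 \<le> frob_norm (err_op F' G' {1})" by (simp add: frob hnorm_nonneg)
    ultimately show "0 \<le> x" by linarith
  qed
  obtain F0 G0 :: "nat \<Rightarrow> complex^'n" where d0: "dual_pair N F0 G0"
    and e0: "eps1_pair N F0 G0 = real CARD('n) / real N"
    using exists_opt[OF cardN] by blast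
  have "eps1 N TYPE('n) \<le> real CARD('n) / real N"
    unfolding eps1_def S_def[symmetric] e0[symmetric]
    by (rule cInf_lower[OF _ bdd]) (use d0 S_def in blast)
  hence le: "cmod (cinner (F i) (G i)) \<le> real CARD('n) / real N" if "i \<in> {1..N}" for i
  proof -
    have "cmod (cinner (F i) (G i)) \<le> frob_norm (err_op F G {i})" by (simp add: frob cs)
    also have "\<dots> \<le> eps1_pair N F G" unfolding eps1_pair_def using that by (intro Max_ge) auto
    finally show ?thesis using opt \<open>eps1 N TYPE('n) \<le> _\<close> by linarith
  qed
  have sum: "(\<Sum>i=1..N. cinner (F i) (G i)) = complex_of_real (real N * (real CARD('n) / real N))"
    using trace_dual[of N F G] dp N1 unfolding dual_pair_def by simp
  have eq: "cinner (F i) (G i) = of_nat CARD('n) / of_nat N" if "i \<in> {1..N}" for i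
    using all_eq[OF N1 sum le that] by simp
  show ?thesis unfolding uniform1_def using eq by simp
qed

end
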